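(* Let $N,M_s,M_d\ge1$ be integers, $P_s,\sigma_r^2,\sigma_d^2,\gamma_0>0$, $\varepsilon\ge 0$, $\mathbf H_{sr}\in\mathbb C^{N\times M_s}$ and $\tilde{\mathbf H}_{rd}\in\mathbb C^{M_d\times N}$. Consider the problem $$\mathcal P_2:\ \min_{\mathbf W\in\mathbb C^{N\times N},\,\mathbf b\in\mathbb C^{M_s},\,\mathbf r\in\mathbb C^{M_d},\,P_r}\ P_r$$ subject to $$\min_{\|\Delta \mathbf H\|_F\leq \varepsilon}\frac{P_s|\mathbf r^H(\tilde {\mathbf H}_{rd}+\Delta \mathbf H)\mathbf W\mathbf H_{sr}\mathbf b|^2}{\sigma_r^2\|\mathbf r^H(\tilde {\mathbf H}_{rd}+\Delta \mathbf H)\mathbf W\|_2^2+\sigma_d^2}\geq \gamma_0,$$ $[P_s\mathbf W\mathbf H_{sr}\mathbf b\mathbf b^H\mathbf H_{sr}^H\mathbf W^H+\sigma_r^2\mathbf W\mathbf W^H]_{i,i}\leq P_r$ for $i=1,\dots,N$, $\|\mathbf b\|_2=1$, $\|\mathbf r\|_2=1$ (the inner minimum being over $\Delta\mathbf H\in\mathbb C^{M_d\times N}$). Let $f^\circ$ be the maximum value and $(\mathbf w^\circ,\cdot)$ an optimal solution of $$\max_{\mathbf w\in\mathbb C^N,\ \mathbf r\in\mathbb C^{M_d}}\ |\mathbf r^H\tilde {\mathbf H}_{rd}\mathbf w|-\varepsilon\|\mathbf w\|_2\quad\text{s.t. } |w_i|\le 1\ (i=1,\dots,N),\ \|\mathbf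 r\|_2=1.$$ Then the optimal $(\mathbf W,\mathbf b,\mathbf r)$ of $\mathcal P_2$ are given by $$\mathbf W=\frac{\mathbf w^\circ\mathbf b^{ H}\mathbf H_{sr}^H}{\|\mathbf H_{sr}\mathbf b\|_2\max\{f^\circ, 0\}}\sqrt{\frac{\gamma_0\sigma_d^2}{P_s\|\mathbf H_{sr}\mathbf b\|_2^2-\gamma_0\sigma_r^2}},\quad \mathbf b={\bm \nu}(\mathbf H_{sr}^H\mathbf H_{sr}),\quad \mathbf r=\frac{\tilde {\mathbf H}_{rd}\mathbf w^\circ}{\|\tilde {\mathbf H}_{rd}\mathbf w^\circ\|_2},$$ with the corresponding optimal power $$P_r=\frac{\gamma_0\sigma_d^2(P_s\|\mathbf H_{sr}\mathbf b\|_2^2+\sigma_r^2)}{(P_s\|\mathbf H_{sr}\mathbf b\|_2^2-\gamma_0\sigma_r^2)\max\{f^\circ, 0\}^2}.$$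
   Context: ${\bm \nu}(\mathbf A)$ denotes a unit-norm eigenvector associated with the largest eigenvalue of a Hermitian matrix $\mathbf A$. $[\mathbf A]_{i,i}$ is the $i$-th diagonal entry; $(\cdot)^H$ conjugate transpose; $\|\cdot\|_2$ Euclidean norm; $\|\cdot\|_F$ Frobenius norm; $w_i$ is the $i$-th entry of $\mathbf w$. The setting is a two-hop amplify-and-forward relay: source beamformer $\mathbf b$, relay matrix $\mathbf W$, destination beamformer $\mathbf r$, first-hop channel $\mathbf H_{sr}$, estimated second-hop channel $\tilde{\mathbf H}_{rd}$ with error $\Delta\mathbf H$ bounded by $\varepsilon$, source power $P_s$, per-antenna relay power $P_r$, received SNR target $\gamma_0$, noise variances $\sigma_r^2,\sigma_d^2$. *)

theory Defs
  imports "HOL-Analysis.Analysis"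
begin

text \<open>Complex matrices are Cartesian: an m x n matrix is complex^'n^'m (A $ i $ j).
  The Euclidean norm of a vector is the library norm on complex^'n.\<close>

definition cadj :: "complex^'n^'m \<Rightarrow> complex^'m^'n" where
  "cadj A = (\<chi> i j. cnj (A $ j $ i))"

definition cvcnj :: "complex^'n \<Rightarrow> complex^'n" where
  "cvcnj x = (\<chi> i. cnj (x $ i))"

definition cinner :: "complex^'n \<Rightarrow> complex^'n \<Rightarrow> complex" where
  "cinner r y = (\<Sum>i\<in>UNIV. cnj (r $ i) * y $ i)"

definition outer :: "complex^'n \<Rightarrow> complex^'m \<Rightarrow> complex^'m^'n" where
  "outer x y = (\<chi> i j. x $ i * cnj (y $ j))"

definition frob_norm :: "complex^'n^'m \<Rightarrow> real" where
  "frob_norm A = sqrt (\<Sum>i\<in>UNIV. \<Sum>j\<in>UNIV. (cmod (A $ i $ j))\<^sup>2)"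

definition is_top_eigvec :: "complex^'n^'n \<Rightarrow> complex^'n \<Rightarrow> bool" where
  "is_top_eigvec A v \<longleftrightarrow> norm v = 1 \<and>
     (\<exists>lam::real. A *v v = complex_of_real lam *s v \<and>
        (\<forall>(mu::complex) u. u \<noteq> 0 \<and> A *v u = mu *s u \<longrightarrow> Re mu \<le> lam))"

definition snr :: "real \<Rightarrow> real \<Rightarrow> real \<Rightarrow> complex^'s^'n \<Rightarrow> complex^'n^'d \<Rightarrow> complex^'n^'n
     \<Rightarrow> complex^'s \<Rightarrow> complex^'d \<Rightarrow> real" where
  "snr Ps sr2 sd2 Hsr G W b r =
     Ps * (cmod (cinner r ((G ** W) *v (Hsr *v b))))\<^sup>2 /
     (sr2 * (norm (cvcnj r v* (G ** W)))\<^sup>2 + sd2)"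

text \<open>feasibility of (W, b, r, Pr) for problem P2; the robust constraint
  "min over ||Delta H||_F <= eps of SNR >= gamma0" is written as SNR >= gamma0 for all such Delta H\<close>
definition P2_feasible :: "real \<Rightarrow> real \<Rightarrow> real \<Rightarrow> real \<Rightarrow> real \<Rightarrow> complex^'s^'n \<Rightarrow> complex^'n^'d
     \<Rightarrow> complex^'n^'n \<Rightarrow> complex^'s \<Rightarrow> complex^'d \<Rightarrow> real \<Rightarrow> bool" where
  "P2_feasible Ps sr2 sd2 g0 eps Hsr Hrd W b r Pr \<longleftrightarrow>
     (\<forall>DH::complex^'n^'d. frob_norm DH \<le> eps \<longrightarrow> snr Ps sr2 sd2 Hsr (Hrd + DH) W b r \<ge> g0) \<and>
     (\<forall>i. Re ((Ps *\<^sub>R (W ** Hsr ** outer b b ** cadj Hsr ** cadj W) + sr2 *\<^sub>R (W ** cadj W)) $ i $ i) \<le> Pr) \<and>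
     norm b = 1 \<and> norm r = 1"

definition aux_feasible :: "complex^'n \<Rightarrow> complex^'d \<Rightarrow> bool" where
  "aux_feasible w r \<longleftrightarrow> (\<forall>i. cmod (w $ i) \<le> 1) \<and> norm r = 1"

definition aux_obj :: "real \<Rightarrow> complex^'n^'d \<Rightarrow> complex^'n \<Rightarrow> complex^'d \<Rightarrow> real" where
  "aux_obj eps Hrd w r = cmod (cinner r (Hrd *v w)) - eps * norm w"

end

theory Submission
  imports Defs
begin

lemma norm_sq_vec: "(norm (x::complex^'n))^2 = (\<Sum>i\<in>UNIV. (cmod (x$i))^2)"
  by (simp add: norm_vec_def L2_set_def sum_nonneg)

lemma norm_smult: "norm (c *s (v::complex^'n)) = cmod c * norm v"
proof -
  have "(norm (c *s v))^2 = (cmod c * norm v)^2"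
    by (simp add: norm_sq_vec norm_mult power_mult_distrib sum_distrib_left)
  then show ?thesis by (rule power2_eq_imp_eq) auto
qed

lemma cinner_self: "cinner (y::complex^'n) y = complex_of_real ((norm y)^2)"
proof -
  have "complex_of_real ((norm y)^2) = (\<Sum>i\<in>UNIV. complex_of_real ((cmod (y$i))^2))"
    by (simp only: norm_sq_vec of_real_sum)
  also have "\<dots> = (\<Sum>i\<in>UNIV. cnj (y$i) * y$i)"
    by (simp only: complex_norm_square mult.commute)
  finally show ?thesis by (simp add: cinner_def)
qed

lemma cinner_cs: "cmod (cinner r y) \<le> norm r * norm y"
proof -
  have "cmod (cinner r y) \<le> (\<Sum>i\<in>UNIV. cmod (cnj (r$i) * y$i))"
    unfolding cinner_def by (rule norm_sum)
  also have "\<dots> = (\<Sum>i\<in>UNIV. \<bar>cmod (r$i)\<bar> * \<bar>cmod (y$i)\<bar>)" by (simp add: norm_mult)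
  also have "\<dots> \<le> L2_set (\<lambda>i. cmod (r$i)) UNIV * L2_set (\<lambda>i. cmod (y$i)) UNIV"
    by (rule L2_set_mult_ineq)
  finally show ?thesis by (simp add: norm_vec_def)
qed

lemma inner_complex_vec: "(x::complex^'n) \<bullet> y = Re (cinner x y)"
  by (simp add: inner_vec_def cinner_def inner_complex_def Re_sum)

lemma cinner_add_right: "cinner r (x + y) = cinner r x + cinner r y"
  by (simp add: cinner_def distrib_left sum.distrib)
lemma cinner_add_left: "cinner (x + y) r = cinner x r + cinner y r"
  by (simp add: cinner_def distrib_right sum.distrib)
lemma cinner_diff_right: "cinner r (x - y) = cinner r x - cinner r y"
  by (simp add: cinner_def right_diff_distrib sum_subtractf)
lemma cinner_scale_right: "cinner r (c *s y) = c * cinner r y"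
  by (simp add: cinner_def sum_distrib_left algebra_simps)
lemma cinner_scale_left: "cinner (c *s r) y = cnj c * cinner r y"
  by (simp add: cinner_def sum_distrib_left algebra_simps)
lemma cinner_scaleR_right: "cinner r (c *\<^sub>R y) = of_real c * cinner r y"
  unfolding cinner_def vector_scaleR_component by (simp add: sum_distrib_left algebra_simps scaleR_conv_of_real)
lemma cinner_scaleR_left: "cinner (c *\<^sub>R r) y = of_real c * cinner r y"
  unfolding cinner_def vector_scaleR_component by (simp add: sum_distrib_left algebra_simps scaleR_conv_of_real)
lemma cinner_neg_left: "cinner (- x) y = - cinner x y"
  by (simp add: cinner_def sum_negf)
lemma cinner_zero_right[simp]: "cinner r 0 = 0" by (simp add: cinner_def)
lemma cinner_cnj: "cinner y r = cnj (cinner r y)"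
  by (simp add: cinner_def mult.commute)

lemma cinner_adj: "cinner r (M *v y) = cinner (cadj M *v r) y"
proof -
  have "cinner r (M *v y) = (\<Sum>i\<in>UNIV. \<Sum>j\<in>UNIV. cnj (r$i) * (M$i$j * y$j))"
    by (simp add: cinner_def matrix_vector_mult_def sum_distrib_left)
  also have "\<dots> = (\<Sum>j\<in>UNIV. \<Sum>i\<in>UNIV. cnj (r$i) * (M$i$j * y$j))"
    by (rule sum.swap)
  also have "\<dots> = cinner (cadj M *v r) y"
    by (simp add: cinner_def matrix_vector_mult_def cadj_def sum_distrib_right sum_distrib_left algebra_simps)
  finally show ?thesis .
qed

lemma norm_cvcnj[simp]: "norm (cvcnj x) = norm x"
  by (simp add: norm_vec_def cvcnj_def)

lemma cvcnj_vm: "cvcnj r v* M = cvcnj (cadj M *v r)"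
  by (simp add: vec_eq_iff cvcnj_def cadj_def vector_matrix_mult_def matrix_vector_mult_def mult.commute)

lemma cadj_mult: "cadj (A ** B) = cadj B ** cadj A"
  by (simp add: vec_eq_iff cadj_def matrix_matrix_mult_def mult.commute)

lemma cadj_scaleR: "cadj (c *\<^sub>R A) = c *\<^sub>R cadj A"
  unfolding vec_eq_iff cadj_def vector_scaleR_component by (simp add: scaleR_conv_of_real)

lemma cadj_outer: "cadj (outer u v) = outer v u"
  by (simp add: vec_eq_iff cadj_def outer_def)

lemma outer_mv: "outer u v *v w = cinner v w *s u"
  by (simp add: vec_eq_iff outer_def matrix_vector_mult_def cinner_def sum_distrib_left algebra_simps)

lemma mat_outer: "A ** outer u v = outer (A *v u) v"
  by (simp add: vec_eq_iff outer_def matrix_vector_mult_def matrix_matrix_mult_def sum_distrib_right sum_distrib_left algebra_simps)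

lemma outer_cadj: "outer u v ** cadj N = outer u (N *v v)"
  by (simp add: vec_eq_iff outer_def matrix_vector_mult_def matrix_matrix_mult_def cadj_def sum_distrib_left algebra_simps)

lemma mv_row: "(M *v w)$i = cinner (cvcnj (M$i)) w"
  by (simp add: matrix_vector_mult_def cinner_def cvcnj_def)

lemma frob_rows: "frob_norm M = sqrt (\<Sum>i\<in>UNIV. (norm (M$i))^2)"
  by (simp add: frob_norm_def norm_sq_vec)

lemma frob_outer: "frob_norm (outer u v) = norm u * norm v"
proof -
  have "(\<Sum>i\<in>UNIV. \<Sum>j\<in>UNIV. (cmod (outer u v $ i $ j))\<^sup>2) = (norm u)^2 * (norm v)^2"
    by (simp add: outer_def norm_sq_vec norm_mult power_mult_distrib sum_product)
  then show ?thesis by (simp add: frob_norm_def real_sqrt_mult)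
qed

lemma norm_mv_frob: "norm (M *v w) \<le> frob_norm M * norm w"
proof -
  have "(norm (M *v w))^2 = (\<Sum>i\<in>UNIV. (cmod ((M *v w)$i))^2)" by (rule norm_sq_vec)
  also have "\<dots> \<le> (\<Sum>i\<in>UNIV. (norm (M$i))^2 * (norm w)^2)"
  proof (rule sum_mono)
    fix i
    have "cmod ((M *v w)$i) \<le> norm (M$i) * norm w"
      using cinner_cs[of "cvcnj (M$i)" w] by (simp add: mv_row)
    then show "(cmod ((M *v w)$i))^2 \<le> (norm (M$i))^2 * (norm w)^2"
      by (metis norm_ge_zero power_mono power_mult_distrib)
  qed
  also have "\<dots> = (frob_norm M * norm w)^2"
    by (simp add: frob_rows power_mult_distrib sum_distrib_right sum_nonneg)
  finally have "(norm (M *v w))^2 \<le> (frob_norm M * norm w)^2" .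
  then show ?thesis
    by (rule power2_le_imp_le) (auto simp: frob_norm_def sum_nonneg)
qed
lemma adj_inner: "(H *v v) \<bullet> u = v \<bullet> (cadj H *v (u::complex^'m))"
proof -
  have "(H *v v) \<bullet> u = u \<bullet> (H *v v)" by (rule inner_commute)
  also have "\<dots> = Re (cinner u (H *v v))" by (rule inner_complex_vec)
  also have "\<dots> = Re (cinner (cadj H *v u) v)" by (simp add: cinner_adj)
  also have "\<dots> = (cadj H *v u) \<bullet> v" by (simp add: inner_complex_vec)
  finally show ?thesis by (simp add: inner_commute)
qed

lemma scaleR_cvec: "c *\<^sub>R (v::complex^'n) = complex_of_real c *s v"
  unfolding vec_eq_iff vector_scaleR_component by (simp add: scaleR_conv_of_real)

lemma mv_scaleR: "H *v (c *\<^sub>R y) = c *\<^sub>R (H *v (y::complex^'n))"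
  by (simp add: vec_eq_iff matrix_vector_mult_def scaleR_sum_right)

lemma rayleigh:
  fixes H :: "complex^'s::finite^'n::finite"
  assumes eig: "is_top_eigvec (cadj H ** H) b" and nb: "norm b' = 1"
  shows "norm (H *v b') \<le> norm (H *v b)"
proof -
  define phi where "phi = (\<lambda>y. (norm (H *v y))^2)"
  have ne: "sphere (0::complex^'s) 1 \<noteq> {}"
    using nb by auto
  have cont: "continuous_on (sphere (0::complex^'s) 1) phi"
    unfolding phi_def by (intro continuous_intros matrix_vector_mult_linear_continuous_on)
  obtain v where v1: "norm v = 1" and vmax: "\<And>y. norm y = 1 \<Longrightarrow> phi y \<le> phi v"
    using continuous_attains_sup[OF compact_sphere ne cont] by auto
  define M where "M = phi v"
  have hom: "phi y \<le> M * (norm y)^2" for y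
  proof (cases "y = 0")
    case True then show ?thesis by (simp add: phi_def)
  next
    case False
    then have ny: "norm y > 0" by simp
    have "phi ((1 / norm y) *\<^sub>R y) \<le> M" using vmax[of "(1 / norm y) *\<^sub>R y"] ny
      by (simp add: M_def)
    moreover have "phi ((1 / norm y) *\<^sub>R y) = phi y / (norm y)^2"
      by (simp add: phi_def mv_scaleR power_divide)
    ultimately show ?thesis using ny by (simp add: divide_le_eq mult.commute)
  qed
  define z where "z = cadj H *v (H *v v)"
  define d where "d = z - M *\<^sub>R v"
  have phi_inner: "phi y = (H *v y) \<bullet> (H *v y)" for y by (simp add: phi_def power2_norm_eq_inner)
  have vz: "v \<bullet> z = M" unfolding z_def M_def phi_inner adj_inner ..
  have vv: "v \<bullet> v = 1" using v1 by (simp add: power2_norm_eq_inner[symmetric])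
  have vd: "v \<bullet> d = 0" by (simp add: d_def inner_diff_right vz vv)
  have dz: "(H *v v) \<bullet> (H *v d) = d \<bullet> d"
  proof -
    have "(H *v v) \<bullet> (H *v d) = (H *v d) \<bullet> (H *v v)" by (rule inner_commute)
    also have "\<dots> = d \<bullet> z" by (simp add: adj_inner z_def)
    also have "\<dots> = d \<bullet> d" using vd by (simp add: d_def inner_diff_left inner_commute)
    finally show ?thesis .
  qed
  define D where "D = d \<bullet> d"
  define K where "K = (H *v d) \<bullet> (H *v d)"
  have step: "2 * D \<le> t * (M * D - K)" if t: "t > 0" for t
  proof -
    have "phi (v + t *\<^sub>R d) = M + 2 * t * D + t^2 * K"
      by (simp add: phi_inner M_def[unfolded phi_inner] matrix_vector_right_distrib mv_scaleR
          inner_add_left inner_add_right dz D_def K_def power2_eq_square inner_commute[of "H *v d" "H *v v"] algebra_simps)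
    moreover have "(norm (v + t *\<^sub>R d))^2 = 1 + t^2 * D"
      unfolding power2_norm_eq_inner by (simp add: inner_add_left inner_add_right vv vd D_def inner_commute[of d v] power2_eq_square)
    ultimately have "M + 2 * t * D + t^2 * K \<le> M * (1 + t^2 * D)" using hom[of "v + t *\<^sub>R d"] by simp
    then have "t * (2 * D) \<le> t * (t * (M * D - K))" by (simp add: algebra_simps power2_eq_square)
    then show ?thesis using t by simp
  qed
  have "D = 0"
  proof (rule ccontr)
    assume "D \<noteq> 0"
    then have Dp: "D > 0" by (simp add: D_def)
    define C where "C = M * D - K"
    have tp: "D / (\<bar>C\<bar> + 1) > 0" using Dp by simp
    have "2 * D \<le> D / (\<bar>C\<bar> + 1) * C" using step[OF tp] by (simp add: C_def)
    also have "\<dots> \<le> D / (\<bar>C\<bar> + 1) * \<bar>C\<bar>" using tp by (intro mult_left_mono) auto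
    also have "\<dots> \<le> D" using Dp by (simp add: field_simps)
    finally show False using Dp by simp
  qed
  then have "d = 0" by (simp add: D_def)
  then have zv: "(cadj H ** H) *v v = complex_of_real M *s v"
    by (simp add: d_def z_def matrix_vector_mul_assoc scaleR_cvec)
  from eig obtain lam where b1: "norm b = 1" and blam: "(cadj H ** H) *v b = complex_of_real lam *s b"
    and top: "\<And>mu u. u \<noteq> 0 \<Longrightarrow> (cadj H ** H) *v u = mu *s u \<Longrightarrow> Re mu \<le> lam"
    unfolding is_top_eigvec_def by blast
  have "v \<noteq> 0" using v1 by auto
  then have Ml: "M \<le> lam" using top[OF _ zv] by simp
  have "phi b = b \<bullet> ((cadj H ** H) *v b)"
    by (simp add: phi_inner adj_inner matrix_vector_mul_assoc[symmetric])
  also have "\<dots> = lam" using b1 by (simp add: blam scaleR_cvec[symmetric] power2_norm_eq_inner[symmetric])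
  finally have "phi b' \<le> phi b" using hom[of b'] nb Ml by simp
  then show ?thesis unfolding phi_def by (simp add: power_mono_iff)
qed
lemma snr_ineq:
  assumes s: "snr Ps sr2 sd2 Hsr G W b r \<ge> g0" and pos: "g0 > 0" "sr2 > 0" "sd2 > 0" "Ps > 0"
  shows "cinner r (G *v (W *v (Hsr *v b))) \<noteq> 0"
    "g0 * (sr2 * (cmod (cinner r (G *v (W *v (Hsr *v b)))))^2 + sd2 * (norm (Hsr *v b))^2)
       \<le> Ps * (cmod (cinner r (G *v (W *v (Hsr *v b)))))^2 * (norm (Hsr *v b))^2"
proof -
  define x where "x = Hsr *v b"
  define N where "N = cinner r (G *v (W *v x))"
  define U where "U = norm (cadj (G ** W) *v r)"
  have sn: "snr Ps sr2 sd2 Hsr G W b r = Ps * (cmod N)^2 / (sr2 * U^2 + sd2)"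
    by (simp add: snr_def N_def U_def x_def cvcnj_vm matrix_vector_mul_assoc matrix_mul_assoc)
  have den: "sr2 * U^2 + sd2 > 0" using pos by (simp add: add_nonneg_pos)
  from s have g: "g0 * (sr2 * U^2 + sd2) \<le> Ps * (cmod N)^2"
    using den by (simp add: sn le_divide_eq)
  show "cinner r (G *v (W *v (Hsr *v b))) \<noteq> 0"
  proof
    assume "cinner r (G *v (W *v (Hsr *v b))) = 0"
    then have "N = 0" by (simp add: N_def x_def)
    moreover have "g0 * (sr2 * U^2 + sd2) > 0" using pos den by (simp add: zero_less_mult_iff)
    ultimately show False using g by simp
  qed
  have "N = cinner (cadj (G ** W) *v r) x"
    by (simp add: N_def cinner_adj matrix_vector_mul_assoc)
  then have "cmod N \<le> U * norm x" by (simp add: U_def cinner_cs)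
  then have NU: "(cmod N)^2 \<le> U^2 * (norm x)^2"
    by (metis norm_ge_zero power_mono power_mult_distrib)
  have "g0 * (sr2 * (cmod N)^2 + sd2 * (norm x)^2) \<le> g0 * (sr2 * (U^2 * (norm x)^2) + sd2 * (norm x)^2)"
    using NU pos by (intro mult_left_mono add_right_mono) auto
  also have "\<dots> = (g0 * (sr2 * U^2 + sd2)) * (norm x)^2" by (simp add: algebra_simps)
  also have "\<dots> \<le> (Ps * (cmod N)^2) * (norm x)^2" using g by (intro mult_right_mono) auto
  finally show "g0 * (sr2 * (cmod (cinner r (G *v (W *v (Hsr *v b)))))^2 + sd2 * (norm (Hsr *v b))^2)
       \<le> Ps * (cmod (cinner r (G *v (W *v (Hsr *v b)))))^2 * (norm (Hsr *v b))^2"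
    by (simp add: N_def x_def)
qed

lemma power_diag:
  "Re ((Ps *\<^sub>R (W ** Hsr ** outer b b ** cadj Hsr ** cadj W) + sr2 *\<^sub>R (W ** cadj W)) $ i $ i)
    = Ps * (cmod ((W *v (Hsr *v b))$i))^2 + sr2 * (norm (W$i))^2"
proof -
  define y where "y = W *v (Hsr *v b)"
  have "W ** Hsr ** outer b b ** cadj Hsr ** cadj W = outer y y"
    by (simp add: mat_outer outer_cadj y_def matrix_vector_mul_assoc)
  moreover have "Re (outer y y $ i $ i) = (cmod (y$i))^2"
    by (simp add: outer_def complex_norm_square[symmetric] del: of_real_power)
  moreover have "Re ((W ** cadj W) $ i $ i) = (norm (W$i))^2"
    by (simp add: matrix_matrix_mult_def cadj_def norm_sq_vec Re_sum complex_norm_square[symmetric] del: of_real_power)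
  ultimately show ?thesis by (simp add: y_def)
qed
lemma frac_cmp:
  fixes x y p q :: real
  assumes "p > 0" "q > 0" "x * q \<le> y * p" shows "x / p \<le> y / q"
proof -
  have "x / p = (x * q) / (p * q)" using assms by simp
  also have "\<dots> \<le> (y * p) / (p * q)" using assms by (intro divide_right_mono) auto
  also have "\<dots> = y / q" using assms by simp
  finally show ?thesis .
qed

lemma final_arith:
  fixes Ps sr2 sd2 g0 f0 m g hx h P :: real
  assumes pos: "Ps > 0" "sr2 > 0" "sd2 > 0" "g0 > 0" and mp: "m > 0" and gp: "g > 0"
    and hxp: "hx > 0" and hxh: "hx \<le> h" and gm: "g \<le> m * f0"
    and key: "g0 * (sr2 * g^2 + sd2 * hx^2) \<le> Ps * g^2 * hx^2"
    and pw: "Ps * m^2 + sr2 * m^2 / hx^2 \<le> P"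
  shows "f0 > 0" "Ps * h^2 - g0 * sr2 > 0"
    "g0 * sd2 * (Ps * h^2 + sr2) / ((Ps * h^2 - g0 * sr2) * f0^2) \<le> P"
proof -
  show f0p: "f0 > 0"
  proof (rule ccontr)
    assume "\<not> f0 > 0"
    then have "m * f0 \<le> 0" using mp by (simp add: mult_nonneg_nonpos)
    then show False using gm gp by linarith
  qed
  define a where "a = Ps * hx^2 - g0 * sr2"
  define bb where "bb = Ps * h^2 - g0 * sr2"
  have ka: "g0 * sd2 * hx^2 \<le> g^2 * a" using key by (simp add: a_def algebra_simps)
  have "g0 * sd2 * hx^2 > 0" using pos hxp by simp
  then have "g^2 * a > 0" using ka by linarith
  then have ap: "a > 0" using gp by (simp add: zero_less_mult_iff)
  have hh: "hx^2 \<le> h^2" using hxh hxp by (intro power_mono) auto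
  have ab: "a \<le> bb" using hh pos by (simp add: a_def bb_def)
  then show bp: "Ps * h^2 - g0 * sr2 > 0" using ap by (simp add: bb_def)
  have bpos: "bb > 0" using ap ab by simp
  have mf: "g^2 \<le> m^2 * f0^2"
  proof -
    have "g^2 \<le> (m * f0)^2" using gm gp by (intro power_mono) auto
    then show ?thesis by (simp add: power_mult_distrib)
  qed
  have c1: "(Ps * h^2 + sr2) * a \<le> (Ps * hx^2 + sr2) * bb"
  proof -
    have "(Ps * hx^2 + sr2) * bb - (Ps * h^2 + sr2) * a = Ps * sr2 * (1 + g0) * (h^2 - hx^2)"
      by (simp add: a_def bb_def algebra_simps)
    moreover have "Ps * sr2 * (1 + g0) * (h^2 - hx^2) \<ge> 0" using pos hh by simp
    ultimately show ?thesis by linarith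
  qed
  have f2: "f0^2 > 0" using f0p by simp
  have "g0 * sd2 * (Ps * h^2 + sr2) / (bb * f0^2) \<le> g0 * sd2 * (Ps * hx^2 + sr2) / (a * f0^2)"
  proof -
    have "g0 * sd2 * ((Ps * h^2 + sr2) * a) \<le> g0 * sd2 * ((Ps * hx^2 + sr2) * bb)"
      using c1 pos by (intro mult_left_mono) auto
    then have "g0 * sd2 * ((Ps * h^2 + sr2) * a) * f0^2 \<le> g0 * sd2 * ((Ps * hx^2 + sr2) * bb) * f0^2"
      by (rule mult_right_mono) (use f2 in auto)
    then have "g0 * sd2 * (Ps * h^2 + sr2) * (a * f0^2) \<le> g0 * sd2 * (Ps * hx^2 + sr2) * (bb * f0^2)"
      by (simp only: mult.assoc)
    then show ?thesis by (rule frac_cmp[rotated 2]) (use ap bpos f2 in simp_all)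
  qed
  also have "\<dots> \<le> g^2 * (Ps * hx^2 + sr2) / (hx^2 * f0^2)"
  proof -
    have "g0 * sd2 * hx^2 * (Ps * hx^2 + sr2) \<le> g^2 * a * (Ps * hx^2 + sr2)"
      using ka pos hxp by (intro mult_right_mono) auto
    then have "g0 * sd2 * hx^2 * (Ps * hx^2 + sr2) * f0^2 \<le> g^2 * a * (Ps * hx^2 + sr2) * f0^2"
      by (rule mult_right_mono) (use f2 in auto)
    then have "g0 * sd2 * (Ps * hx^2 + sr2) * (hx^2 * f0^2) \<le> g^2 * (Ps * hx^2 + sr2) * (a * f0^2)"
      by (simp only: mult.assoc mult.commute mult.left_commute)
    then show ?thesis by (rule frac_cmp[rotated 2]) (use ap hxp f2 in simp_all)
  qed
  also have "\<dots> \<le> m^2 * (Ps * hx^2 + sr2) / hx^2"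
  proof -
    have "g^2 * (Ps * hx^2 + sr2) \<le> m^2 * f0^2 * (Ps * hx^2 + sr2)"
      using mf pos hxp by (intro mult_right_mono) auto
    then have "g^2 * (Ps * hx^2 + sr2) * hx^2 \<le> m^2 * f0^2 * (Ps * hx^2 + sr2) * hx^2"
      by (rule mult_right_mono) (use hxp in auto)
    then have "g^2 * (Ps * hx^2 + sr2) * hx^2 \<le> m^2 * (Ps * hx^2 + sr2) * (hx^2 * f0^2)"
      by (simp only: mult.assoc mult.commute mult.left_commute)
    then show ?thesis by (rule frac_cmp[rotated 2]) (use hxp f2 in simp_all)
  qed
  also have "\<dots> = Ps * m^2 + sr2 * m^2 / hx^2" using hxp by (simp add: field_simps)
  also have "\<dots> \<le> P" by (rule pw)
  finally show "g0 * sd2 * (Ps * h^2 + sr2) / ((Ps * h^2 - g0 * sr2) * f0^2) \<le> P" by (simp add: bb_def)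
qed
lemma lower_bound:
  fixes Hsr :: "complex^'s::finite^'n::finite" and Hrd :: "complex^'n^'d::finite"
    and Ps sr2 sd2 g0 eps :: real
    and w0 :: "complex^'n" and r0 :: "complex^'d" and b :: "complex^'s"
  assumes pos: "Ps > 0" "sr2 > 0" "sd2 > 0" "g0 > 0" "eps \<ge> 0"
    and opt_max: "\<forall>w r. aux_feasible w r \<longrightarrow> aux_obj eps Hrd w r \<le> aux_obj eps Hrd w0 r0"
    and b_eig: "is_top_eigvec (cadj Hsr ** Hsr) b"
    and feas: "P2_feasible Ps sr2 sd2 g0 eps Hsr Hrd W b' r' P"
  shows "aux_obj eps Hrd w0 r0 > 0" "Ps * (norm (Hsr *v b))^2 - g0 * sr2 > 0"
    "g0 * sd2 * (Ps * (norm (Hsr *v b))^2 + sr2) /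
       ((Ps * (norm (Hsr *v b))^2 - g0 * sr2) * (aux_obj eps Hrd w0 r0)^2) \<le> P"
proof -
  define f0 where "f0 = aux_obj eps Hrd w0 r0"
  define h where "h = norm (Hsr *v b)"
  from feas have rob: "\<And>DH. frob_norm DH \<le> eps \<Longrightarrow> snr Ps sr2 sd2 Hsr (Hrd + DH) W b' r' \<ge> g0"
    and pw: "\<And>i. Re ((Ps *\<^sub>R (W ** Hsr ** outer b' b' ** cadj Hsr ** cadj W) + sr2 *\<^sub>R (W ** cadj W)) $ i $ i) \<le> P"
    and nb: "norm b' = 1" and nr: "norm r' = 1"
    unfolding P2_feasible_def by auto
  define x where "x = Hsr *v b'"
  define y where "y = W *v x"
  define q0 where "q0 = cinner r' (Hrd *v y)"
  have rr: "cinner r' r' = 1" using nr by (simp add: cinner_self)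
  have numE: "cinner r' ((Hrd + outer r' e) *v y) = q0 + cinner e y" for e
    by (simp add: matrix_vector_mult_add_rdistrib cinner_add_right outer_mv cinner_scale_right rr q0_def)
  have robE: "q0 + cinner e y \<noteq> 0 \<and>
      g0 * (sr2 * (cmod (q0 + cinner e y))^2 + sd2 * (norm x)^2) \<le> Ps * (cmod (q0 + cinner e y))^2 * (norm x)^2"
    if ne: "norm e \<le> eps" for e
  proof -
    have "frob_norm (outer r' e) \<le> eps" using ne nr by (simp add: frob_outer)
    then have s: "snr Ps sr2 sd2 Hsr (Hrd + outer r' e) W b' r' \<ge> g0" by (rule rob)
    show ?thesis using snr_ineq[OF s pos(4,2,3,1)] numE[of e] by (simp add: x_def y_def)
  qed
  have yy: "cinner y y = complex_of_real ((norm y)^2)" by (rule cinner_self)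
  have qbig: "cmod q0 > eps * norm y"
  proof (rule ccontr)
    assume A: "\<not> cmod q0 > eps * norm y"
    show False
    proof (cases "y = 0")
      case True
      then show ?thesis using robE[of 0] pos by (simp add: q0_def cinner_def)
    next
      case False
      then have ny: "norm y > 0" by simp
      define e where "e = (- cnj q0 / complex_of_real ((norm y)^2)) *s y"
      have "cinner e y = - q0"
        using ny by (simp add: e_def cinner_scale_left cinner_neg_left yy)
      moreover have "norm e \<le> eps"
      proof -
        have "norm e = cmod q0 / (norm y)^2 * norm y"
          by (simp add: e_def norm_smult norm_divide norm_power)
        also have "\<dots> = cmod q0 / norm y" using ny by (simp add: power2_eq_square)
        also have "\<dots> \<le> eps" using A ny by (simp add: divide_le_eq mult.commute)
        finally show ?thesis .
      qed
      ultimately show ?thesis using robE[of e] by simp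
    qed
  qed
  have ynz: "y \<noteq> 0" using qbig pos by (auto simp: q0_def cinner_def)
  then have ny: "norm y > 0" by simp
  have xnz: "x \<noteq> 0" using ynz by (auto simp: y_def)
  then have hxp: "norm x > 0" by simp
  define g where "g = cmod q0 - eps * norm y"
  have gp: "g > 0" using qbig by (simp add: g_def)
  have q0p: "cmod q0 > 0" using qbig pos ny by (meson le_less_trans mult_nonneg_nonneg norm_ge_zero)
  have key: "g0 * (sr2 * g^2 + sd2 * (norm x)^2) \<le> Ps * g^2 * (norm x)^2"
  proof -
    define t where "t = eps * norm y / cmod q0"
    define e where "e = (- complex_of_real (eps / (cmod q0 * norm y)) * cnj q0) *s y"
    have "cinner e y = - complex_of_real t * q0"
      using ny q0p by (simp add: e_def cinner_scale_left cinner_neg_left yy t_def power2_eq_square field_simps)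
    then have N: "q0 + cinner e y = q0 * complex_of_real (1 - t)" by (simp add: algebra_simps)
    have t1: "1 - t > 0" using qbig q0p by (simp add: t_def field_simps)
    have c1: "cmod (complex_of_real (1 - t)) = 1 - t" using t1 by (simp only: norm_of_real abs_of_pos)
    have "cmod (q0 + cinner e y) = cmod q0 * (1 - t)" by (simp only: N norm_mult c1)
    also have "\<dots> = g" using q0p by (simp add: t_def g_def field_simps)
    finally have Ng: "cmod (q0 + cinner e y) = g" .
    have cb: "cmod (- complex_of_real (eps / (cmod q0 * norm y)) * cnj q0) = \<bar>eps / (cmod q0 * norm y)\<bar> * cmod q0"
      by (simp only: norm_mult norm_minus_cancel complex_mod_cnj norm_of_real)
    have "norm e = eps / (cmod q0 * norm y) * cmod q0 * norm y"
      using pos by (simp only: e_def norm_smult cb) simp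
    also have "\<dots> = eps" using q0p ny by simp
    finally have "norm e \<le> eps" by simp
    then show ?thesis using robE[of e] Ng by simp
  qed
  obtain i where imax: "\<And>j. cmod (y$j) \<le> cmod (y$i)"
  proof -
    define S where "S = range (\<lambda>j. cmod (y$j))"
    have "finite S" "S \<noteq> {}" by (auto simp: S_def)
    then have "Max S \<in> S" by (rule Max_in)
    then obtain i where i: "Max S = cmod (y$i)" unfolding S_def by blast
    have "cmod (y$j) \<le> cmod (y$i)" for j
    proof -
      have "cmod (y$j) \<in> S" by (simp add: S_def)
      then have "cmod (y$j) \<le> Max S" using \<open>finite S\<close> by (rule Max_ge[rotated])
      then show ?thesis using i by simp
    qed
    then show ?thesis by (rule that)
  qed
  define m where "m = cmod (y$i)"
  have mp: "m > 0"
  proof -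
    obtain j where "y$j \<noteq> 0" using ynz by (auto simp: vec_eq_iff)
    then have "cmod (y$j) > 0" by simp
    then show ?thesis using imax[of j] unfolding m_def by linarith
  qed
  have mrow: "m \<le> norm (W$i) * norm x"
    using cinner_cs[of "cvcnj (W$i)" x] by (simp add: m_def y_def mv_row)
  have pwi: "Ps * m^2 + sr2 * (norm (W$i))^2 \<le> P"
    using pw[of i] unfolding power_diag m_def y_def x_def .
  have "m^2 \<le> (norm (W$i))^2 * (norm x)^2"
    using mrow mp by (metis less_imp_le power_mono power_mult_distrib)
  then have "m^2 / (norm x)^2 \<le> (norm (W$i))^2" using hxp by (simp add: divide_le_eq)
  then have pw2: "Ps * m^2 + sr2 * m^2 / (norm x)^2 \<le> P"
    using pwi pos by (smt (verit) mult_left_mono times_divide_eq_right)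
  define w where "w = (1 / m) *\<^sub>R y"
  have wf: "aux_feasible w r'"
    unfolding aux_feasible_def using nr imax mp by (simp add: w_def m_def divide_le_eq)
  have "aux_obj eps Hrd w r' = g / m"
    using mp by (simp add: aux_obj_def w_def mv_scaleR cinner_scaleR_right norm_mult norm_divide q0_def g_def diff_divide_distrib)
  then have "g / m \<le> f0" using opt_max wf unfolding f0_def by metis
  then have gm: "g \<le> m * f0" using mp by (simp add: divide_le_eq mult.commute)
  have hxh: "norm x \<le> h" unfolding x_def h_def by (rule rayleigh[OF b_eig nb])
  note fa = final_arith[OF pos(1-4) mp gp hxp hxh gm key pw2]
  show "aux_obj eps Hrd w0 r0 > 0" using fa(1) by (simp add: f0_def)
  show "Ps * (norm (Hsr *v b))^2 - g0 * sr2 > 0" using fa(2) by (simp add: h_def)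
  show "g0 * sd2 * (Ps * (norm (Hsr *v b))^2 + sr2) /
       ((Ps * (norm (Hsr *v b))^2 - g0 * sr2) * (aux_obj eps Hrd w0 r0)^2) \<le> P"
    using fa(3) by (simp add: h_def f0_def)
qed
lemma row_outer: "(outer u v)$i = u$i *s cvcnj v"
  by (simp add: vec_eq_iff outer_def cvcnj_def)

lemma smat_mv: "(c *\<^sub>R A) *v v = c *\<^sub>R (A *v (v::complex^'n))"
  by (simp add: vec_eq_iff matrix_vector_mult_def scaleR_sum_right)

lemma construct_feasible:
  fixes Hsr :: "complex^'s::finite^'n::finite" and Hrd :: "complex^'n^'d::finite"
    and Ps sr2 sd2 g0 eps :: real
    and w0 :: "complex^'n" and r0 :: "complex^'d" and b :: "complex^'s"
  assumes pos: "Ps > 0" "sr2 > 0" "sd2 > 0" "g0 > 0" "eps \<ge> 0"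
    and opt_feas: "aux_feasible w0 r0"
    and nb: "norm b = 1"
    and f0p: "aux_obj eps Hrd w0 r0 > 0"
    and hp: "Ps * (norm (Hsr *v b))^2 - g0 * sr2 > 0"
  shows "P2_feasible Ps sr2 sd2 g0 eps Hsr Hrd
     ((sqrt (g0 * sd2 / (Ps * (norm (Hsr *v b))\<^sup>2 - g0 * sr2)) / (norm (Hsr *v b) * aux_obj eps Hrd w0 r0))
                   *\<^sub>R (outer w0 b ** cadj Hsr)) b
     ((1 / norm (Hrd *v w0)) *\<^sub>R (Hrd *v w0))
     (g0 * sd2 * (Ps * (norm (Hsr *v b))\<^sup>2 + sr2) / ((Ps * (norm (Hsr *v b))\<^sup>2 - g0 * sr2) * (aux_obj eps Hrd w0 r0)\<^sup>2))"
proof -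
  define f0 where "f0 = aux_obj eps Hrd w0 r0"
  define x where "x = Hsr *v b"
  define h where "h = norm x"
  define K where "K = g0 * sd2 / (Ps * h^2 - g0 * sr2)"
  define c where "c = sqrt K / (h * f0)"
  define W where "W = c *\<^sub>R outer w0 x"
  define n where "n = norm (Hrd *v w0)"
  define r where "r = (1 / n) *\<^sub>R (Hrd *v w0)"
  have fp: "f0 > 0" using f0p by (simp add: f0_def)
  have hpos: "Ps * h^2 - g0 * sr2 > 0" using hp by (simp add: h_def x_def)
  have Kp: "K > 0" using hpos pos by (simp add: K_def)
  have KK: "K * (Ps * h^2 - g0 * sr2) = g0 * sd2" using hpos by (simp add: K_def)
  have h0: "h > 0"
  proof -
    have "Ps * h^2 > 0" using hpos pos by (smt (verit) mult_pos_pos)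
    then have "h \<noteq> 0" by auto
    then show ?thesis by (simp add: h_def)
  qed
  have c2: "c^2 * h^2 * f0^2 = K" using Kp h0 fp by (simp add: c_def power_divide power_mult_distrib)
  have cp: "c > 0" using Kp h0 fp by (simp add: c_def)
  have nr0: "norm r0 = 1" and w0b: "\<And>i. cmod (w0$i) \<le> 1" using opt_feas by (auto simp: aux_feasible_def)
  have f0n: "f0 \<le> n - eps * norm w0"
    using cinner_cs[of r0 "Hrd *v w0"] nr0 by (simp add: f0_def aux_obj_def n_def)
  have np: "n > 0" using f0n fp pos by (smt (verit) mult_nonneg_nonneg norm_ge_zero)
  have nr: "norm r = 1" using np by (simp add: r_def n_def)
  have rH: "cinner r (Hrd *v w0) = complex_of_real n"
    using np by (simp add: r_def cinner_scaleR_left cinner_self n_def power2_eq_square)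
  have Wx: "W *v x = (c * h^2) *\<^sub>R w0"
    by (simp add: W_def smat_mv outer_mv cinner_self h_def scaleR_cvec)
  have Weq: "outer w0 b ** cadj Hsr = outer w0 x" by (simp add: outer_cadj x_def)
  have robust: "snr Ps sr2 sd2 Hsr (Hrd + DH) W b r \<ge> g0" if fd: "frob_norm DH \<le> eps" for DH
  proof -
    define G where "G = Hrd + DH"
    define a where "a = cinner r (G *v w0)"
    have "cmod (cinner r (DH *v w0)) \<le> eps * norm w0"
    proof -
      have "cmod (cinner r (DH *v w0)) \<le> norm (DH *v w0)" using cinner_cs[of r "DH *v w0"] nr by simp
      also have "\<dots> \<le> frob_norm DH * norm w0" by (rule norm_mv_frob)
      also have "\<dots> \<le> eps * norm w0" using fd by (intro mult_right_mono) auto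
      finally show ?thesis .
    qed
    moreover have aeq: "a = complex_of_real n + cinner r (DH *v w0)"
      by (simp add: a_def G_def matrix_vector_mult_add_rdistrib cinner_add_right rH)
    moreover have "cmod (complex_of_real n) - cmod (cinner r (DH *v w0)) \<le> cmod a"
      unfolding aeq by (rule norm_diff_ineq)
    moreover have "cmod (complex_of_real n) = n" using np by simp
    ultimately have "cmod a \<ge> n - eps * norm w0" by linarith
    then have af: "cmod a \<ge> f0" using f0n by simp
    have N: "cinner r ((G ** W) *v (Hsr *v b)) = complex_of_real (c * h^2) * a"
      by (simp add: matrix_vector_mul_assoc[symmetric] x_def[symmetric] Wx mv_scaleR cinner_scaleR_right a_def)
    have U: "norm (cvcnj r v* (G ** W)) = c * cmod a * h"
    proof -
      have "cadj (G ** W) *v r = c *\<^sub>R (cinner w0 (cadj G *v r) *s x)"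
        by (simp add: cadj_mult matrix_vector_mul_assoc[symmetric] W_def cadj_scaleR cadj_outer
            smat_mv outer_mv)
      moreover have "cinner w0 (cadj G *v r) = cnj a"
        by (simp add: a_def cinner_adj[of r G w0] cinner_cnj[of w0])
      ultimately show ?thesis using cp by (simp add: cvcnj_vm norm_smult h_def)
    qed
    define s where "s = c^2 * (cmod a)^2 * h^2"
    have sK: "s \<ge> K"
    proof -
      have "f0^2 \<le> (cmod a)^2" using af fp by (intro power_mono) auto
      then have "c^2 * h^2 * f0^2 \<le> c^2 * h^2 * (cmod a)^2" by (intro mult_left_mono) auto
      then show ?thesis using c2 by (simp add: s_def algebra_simps)
    qed
    have sn: "snr Ps sr2 sd2 Hsr G W b r = Ps * h^2 * s / (sr2 * s + sd2)"
      using cp h0 by (simp add: snr_def N U norm_mult norm_power s_def power_mult_distrib algebra_simps abs_of_pos)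
    have sp: "sr2 * s + sd2 > 0" using pos by (simp add: s_def add_nonneg_pos)
    have "g0 * (sr2 * s + sd2) \<le> Ps * h^2 * s"
    proof -
      have "g0 * sd2 = K * (Ps * h^2 - g0 * sr2)" using KK by simp
      also have "\<dots> \<le> s * (Ps * h^2 - g0 * sr2)" using sK hpos by (intro mult_right_mono) auto
      finally show ?thesis by (simp add: algebra_simps)
    qed
    then show ?thesis unfolding G_def[symmetric] sn using sp by (simp add: le_divide_eq mult.commute)
  qed
  have power: "Re ((Ps *\<^sub>R (W ** Hsr ** outer b b ** cadj Hsr ** cadj W) + sr2 *\<^sub>R (W ** cadj W)) $ i $ i)
      \<le> K * (Ps * h^2 + sr2) / f0^2" for i
  proof -
    have "Re ((Ps *\<^sub>R (W ** Hsr ** outer b b ** cadj Hsr ** cadj W) + sr2 *\<^sub>R (W ** cadj W)) $ i $ i)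
       = Ps * (c * h^2 * cmod (w0$i))^2 + sr2 * (c * cmod (w0$i) * h)^2"
      unfolding power_diag x_def[symmetric] Wx using cp
      by (simp add: W_def row_outer norm_smult h_def norm_mult abs_of_pos power_mult_distrib)
    also have "\<dots> = (cmod (w0$i))^2 * (c^2 * h^2 * (Ps * h^2 + sr2))"
      by (simp add: algebra_simps power2_eq_square)
    also have "\<dots> \<le> 1 * (c^2 * h^2 * (Ps * h^2 + sr2))"
      using w0b[of i] pos by (intro mult_right_mono) (auto simp: power_le_one)
    also have "\<dots> = K * (Ps * h^2 + sr2) / f0^2"
    proof -
      have ch: "c^2 * h^2 = K / f0^2" using c2 fp by (simp add: eq_divide_eq)
      show ?thesis by (simp only: ch) simp
    qed
    finally show ?thesis .
  qed
  have Pr: "K * (Ps * h^2 + sr2) / f0^2 = g0 * sd2 * (Ps * h^2 + sr2) / ((Ps * h^2 - g0 * sr2) * f0^2)"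
    by (simp add: K_def)
  have eqW: "(sqrt (g0 * sd2 / (Ps * (norm (Hsr *v b))\<^sup>2 - g0 * sr2)) / (norm (Hsr *v b) * aux_obj eps Hrd w0 r0))
                   *\<^sub>R (outer w0 b ** cadj Hsr) = W"
    by (simp only: W_def Weq c_def K_def h_def x_def f0_def)
  have eqr: "(1 / norm (Hrd *v w0)) *\<^sub>R (Hrd *v w0) = r" by (simp only: r_def n_def)
  have eqP: "g0 * sd2 * (Ps * (norm (Hsr *v b))\<^sup>2 + sr2) / ((Ps * (norm (Hsr *v b))\<^sup>2 - g0 * sr2) * (aux_obj eps Hrd w0 r0)\<^sup>2)
     = K * (Ps * h^2 + sr2) / f0^2"
    unfolding Pr by (simp only: h_def x_def f0_def)
  show ?thesis
    unfolding eqW eqr eqP P2_feasible_def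
    using robust power nb nr by blast
qed

theorem theorem2:
  fixes Hsr :: "complex^'s::finite^'n::finite" and Hrd :: "complex^'n^'d::finite"
    and Ps sr2 sd2 g0 eps :: real
    and w0 :: "complex^'n" and r0 :: "complex^'d" and b :: "complex^'s"
  assumes "Ps > 0" "sr2 > 0" "sd2 > 0" "g0 > 0" "eps \<ge> 0"
    and opt_feas: "aux_feasible w0 r0"
    and opt_max: "\<forall>w r. aux_feasible w r \<longrightarrow> aux_obj eps Hrd w r \<le> aux_obj eps Hrd w0 r0"
    and b_eig: "is_top_eigvec (cadj Hsr ** Hsr) b"
    and P2_feas: "\<exists>W b' r' P. P2_feasible Ps sr2 sd2 g0 eps Hsr Hrd W b' r' P"
  shows "let f0 = aux_obj eps Hrd w0 r0;
             h = norm (Hsr *v b);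
             W = (sqrt (g0 * sd2 / (Ps * h\<^sup>2 - g0 * sr2)) / (h * max f0 0))
                   *\<^sub>R (outer w0 b ** cadj Hsr);
             r = (1 / norm (Hrd *v w0)) *\<^sub>R (Hrd *v w0);
             Pr = g0 * sd2 * (Ps * h\<^sup>2 + sr2) / ((Ps * h\<^sup>2 - g0 * sr2) * (max f0 0)\<^sup>2)
         in P2_feasible Ps sr2 sd2 g0 eps Hsr Hrd W b r Pr \<and>
            (\<forall>W' b' r' P'. P2_feasible Ps sr2 sd2 g0 eps Hsr Hrd W' b' r' P' \<longrightarrow> Pr \<le> P')"
proof -
  note pos = assms(1-5)
  from P2_feas obtain W1 b1 r1 P1 where F: "P2_feasible Ps sr2 sd2 g0 eps Hsr Hrd W1 b1 r1 P1" by blast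
  note lb = lower_bound[OF pos opt_max b_eig F]
  have mx: "max (aux_obj eps Hrd w0 r0) 0 = aux_obj eps Hrd w0 r0" using lb(1) by simp
  have nb: "norm b = 1" using b_eig by (simp add: is_top_eigvec_def)
  have feas: "P2_feasible Ps sr2 sd2 g0 eps Hsr Hrd
     ((sqrt (g0 * sd2 / (Ps * (norm (Hsr *v b))\<^sup>2 - g0 * sr2)) / (norm (Hsr *v b) * aux_obj eps Hrd w0 r0))
                   *\<^sub>R (outer w0 b ** cadj Hsr)) b
     ((1 / norm (Hrd *v w0)) *\<^sub>R (Hrd *v w0))
     (g0 * sd2 * (Ps * (norm (Hsr *v b))\<^sup>2 + sr2) / ((Ps * (norm (Hsr *v b))\<^sup>2 - g0 * sr2) * (aux_obj eps Hrd w0 r0)\<^sup>2))"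
    by (rule construct_feasible[OF pos opt_feas nb lb(1) lb(2)])
  have opt: "\<forall>W' b' r' P'. P2_feasible Ps sr2 sd2 g0 eps Hsr Hrd W' b' r' P' \<longrightarrow>
     g0 * sd2 * (Ps * (norm (Hsr *v b))\<^sup>2 + sr2) / ((Ps * (norm (Hsr *v b))\<^sup>2 - g0 * sr2) * (aux_obj eps Hrd w0 r0)\<^sup>2) \<le> P'"
    using lower_bound(3)[OF pos opt_max b_eig] by blast
  show ?thesis unfolding Let_def mx using feas opt by blast
qed

end
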